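(* Let $\mathbf{G}$ be a positively weighted graph, let $s,t$ be vertices, and let $F\subseteq E(T_{\mathbf{G}}(s))$ be a set of edges such that the subtrees $T_{\mathbf{G}}(s,e)$ for distinct $e\in F$ are pairwise disjoint. Let $S=\bigcup_{e\in F}V(T_{\mathbf{G}}(s,e))$. If $t\in S$, then there is an edge $\{x,y\}\in E_{\mathbf{G}}(V(\mathbf{G})\setminus S,\,S)$ with $\{x,y\}\notin F$ such that $$\pi_{\mathbf{G}\setminus F}(s,t)=\pi_{\mathbf{G}}(s,x)\circ\{x,y\}\circ\pi_{\mathbf{G}\setminus F}(y,t),$$ and moreover for such $x,y$ the path $\pi_{\mathbf{G}\setminus F}(y,t)$ contains only vertices of $S$.
   Context: For every graph $\mathbf{H}$ under consideration (including subgraphs $\mathbf{G}\setminus F$ obtained by deleting edge sets $F$) and every pair of nodes $x,y$, a canonical shortest path $\pi_{\mathbf{H}}(x,y)$ is fixed; canonical paths are closed under subpaths (if $z\in\pi_{\mathbf{H}}(x,y)$ then $\pi_{\mathbf{H}}(x,y)=\pi_{\mathbf{H}}(x,z)\circ\pi_{\mathbf{H}}(z,y)$) and consistent with edge removals (if $e\notin\pi_{\mathbf{H}}(x,y)$ then $\pi_{\mathbf{H}\setminus e}(x,y)=\pi_{\mathbf{H}}(x,y)$). $\circ$ denotes concatenation. $T_{\mathbf{G}}(s)$ is the shortest path tree of $s$ consistent with the canonical paths; for an edge $e$ of it, $T_{\mathbf{G}}(s,e)$ is the subtree of $T_{\mathbf{G}}(s)$ below $e$. $E_{\mathbf{G}}(A,B)=E(\mathbf{G})\cap(A\times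 B)$. *)

theory Defs
  imports Complex_Main
begin

text \<open>Subgraphs G \ F are represented
by their edge set (E - F) over the same vertex set V.\<close>

definition wf_graph :: "'a set \<Rightarrow> 'a set set \<Rightarrow> ('a set \<Rightarrow> real) \<Rightarrow> bool" where
  "wf_graph V E w \<longleftrightarrow> finite V \<and>
     (\<forall>e\<in>E. \<exists>u v. u \<noteq> v \<and> u \<in> V \<and> v \<in> V \<and> e = {u, v}) \<and>
     (\<forall>e\<in>E. w e > 0)"

definition path_edges :: "'a list \<Rightarrow> 'a set set" where
  "path_edges xs = set (map (\<lambda>(a, b). {a, b}) (zip xs (tl xs)))"

definition is_path :: "'a set \<Rightarrow> 'a set set \<Rightarrow> 'a list \<Rightarrow> 'a \<Rightarrow> 'a \<Rightarrow> bool" where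
  "is_path V H xs x y \<longleftrightarrow> xs \<noteq> [] \<and> hd xs = x \<and> last xs = y \<and>
     set xs \<subseteq> V \<and> path_edges xs \<subseteq> H"

definition path_weight :: "('a set \<Rightarrow> real) \<Rightarrow> 'a list \<Rightarrow> real" where
  "path_weight w xs = sum_list (map (\<lambda>(a, b). w {a, b}) (zip xs (tl xs)))"

definition connected_in :: "'a set \<Rightarrow> 'a set set \<Rightarrow> 'a \<Rightarrow> 'a \<Rightarrow> bool" where
  "connected_in V H x y \<longleftrightarrow> (\<exists>xs. is_path V H xs x y)"

definition is_shortest_path ::
  "'a set \<Rightarrow> 'a set set \<Rightarrow> ('a set \<Rightarrow> real) \<Rightarrow> 'a list \<Rightarrow> 'a \<Rightarrow> 'a \<Rightarrow> bool" where
  "is_shortest_path V H w xs x y \<longleftrightarrow> is_path V H xs x y \<and>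
     (\<forall>ys. is_path V H ys x y \<longrightarrow> path_weight w xs \<le> path_weight w ys)"

text \<open>A canonical shortest path system cp: for every subgraph H (edge set H \<subseteq> E)
and every connected pair x,y, cp H x y is a shortest x-y path in (V,H); the system
is closed under subpaths and consistent with edge removals.\<close>

definition canonical_paths ::
  "'a set \<Rightarrow> 'a set set \<Rightarrow> ('a set \<Rightarrow> real) \<Rightarrow> ('a set set \<Rightarrow> 'a \<Rightarrow> 'a \<Rightarrow> 'a list) \<Rightarrow> bool" where
  "canonical_paths V E w cp \<longleftrightarrow>
     (\<forall>H x y. H \<subseteq> E \<and> connected_in V H x y \<longrightarrow>
        is_shortest_path V H w (cp H x y) x y) \<and>
     (\<forall>H x y z. H \<subseteq> E \<and> connected_in V H x y \<and> z \<in> set (cp H x y) \<longrightarrow>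
        cp H x y = cp H x z @ tl (cp H z y)) \<and>
     (\<forall>H x y e. H \<subseteq> E \<and> connected_in V H x y \<and> e \<notin> path_edges (cp H x y) \<longrightarrow>
        cp (H - {e}) x y = cp H x y)"

definition spt_edges ::
  "'a set \<Rightarrow> 'a set set \<Rightarrow> ('a set set \<Rightarrow> 'a \<Rightarrow> 'a \<Rightarrow> 'a list) \<Rightarrow> 'a \<Rightarrow> 'a set set" where
  "spt_edges V E cp s = (\<Union>v\<in>{v\<in>V. connected_in V E s v}. path_edges (cp E s v))"

text \<open>Vertex set of the subtree T_G(s,e) below the tree edge e: the vertices
whose canonical path from s passes through e.\<close>

definition subtree_vertices ::
  "'a set \<Rightarrow> 'a set set \<Rightarrow> ('a set set \<Rightarrow> 'a \<Rightarrow> 'a \<Rightarrow> 'a list) \<Rightarrow> 'a \<Rightarrow> 'a set \<Rightarrow> 'a set" where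
  "subtree_vertices V E cp s e = {v\<in>V. connected_in V E s v \<and> e \<in> path_edges (cp E s v)}"

end

theory Submission
  imports Defs
begin

lemma pe_simps[simp]: "path_edges [] = {}" "path_edges [a] = {}"
  "path_edges (a#b#xs) = insert {a,b} (path_edges (b#xs))"
  by (auto simp: path_edges_def)

lemma pw_simps[simp]: "path_weight w [] = 0" "path_weight w [a] = 0"
  "path_weight w (a#b#xs) = w {a,b} + path_weight w (b#xs)"
  by (auto simp: path_weight_def)

lemma pe_append: "path_edges (xs @ y # ys) = path_edges (xs @ [y]) \<union> path_edges (y # ys)"
  by (induction xs rule: induct_list012) auto

lemma pw_append: "path_weight w (xs @ y # ys) = path_weight w (xs @ [y]) + path_weight w (y # ys)"
  by (induction xs rule: induct_list012) auto

lemma pe_prefix: "path_edges xs \<subseteq> path_edges (xs @ ys)"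
proof (cases ys)
  case (Cons y ys')
  then show ?thesis
  proof (cases xs rule: rev_cases)
    case (snoc as a)
    then show ?thesis using Cons pe_append[of xs y ys'] pe_append[of as a "[y]"] pe_append[of as a "y#ys'"]
      by auto
  qed simp
qed simp

lemma pw_pos: "path_edges xs \<subseteq> E \<Longrightarrow> \<forall>e\<in>E. w e > 0 \<Longrightarrow>
   0 \<le> path_weight w xs \<and> (length xs \<ge> 2 \<longrightarrow> 0 < path_weight w xs)"
proof (induction xs rule: induct_list012)
  case (3 a b xs)
  then show ?case by (auto simp: add_pos_nonneg)
qed auto

lemma path_prefix: "is_path V H (xs @ z # ys) a b \<Longrightarrow> is_path V H (xs @ [z]) a z"
  unfolding is_path_def using pe_prefix[of "xs @ [z]" ys]
  by (cases xs) auto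

lemma path_suffix: "is_path V H (xs @ z # ys) a b \<Longrightarrow> is_path V H (z # ys) z b"
  unfolding is_path_def using pe_append[of xs z ys]
  by auto

lemma path_mono: "is_path V H xs a b \<Longrightarrow> H \<subseteq> H' \<Longrightarrow> is_path V H' xs a b"
  unfolding is_path_def by auto

lemma shortest_distinct:
  assumes sp: "is_shortest_path V H w xs a b" and HE: "H \<subseteq> E" and pos: "\<forall>e\<in>E. w e > 0"
  shows "distinct xs"
proof (rule ccontr)
  assume "\<not> distinct xs"
  then obtain p q r v where xs: "xs = p @ [v] @ q @ [v] @ r" using not_distinct_decomp by blast
  have P: "is_path V H xs a b" using sp unfolding is_shortest_path_def by auto
  have e1: "path_edges xs = path_edges (p @ [v]) \<union> path_edges (v # q @ [v]) \<union> path_edges (v # r)"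
    using xs pe_append[of p v "q @ v # r"] pe_append[of "v # q" v r] by auto
  have w1: "path_weight w xs = path_weight w (p @ [v]) + path_weight w (v # q @ [v]) + path_weight w (v # r)"
    using xs pw_append[of w p v "q @ v # r"] pw_append[of w "v # q" v r] by auto
  have P2: "is_path V H (p @ v # r) a b" using P e1 pe_append[of p v r] unfolding is_path_def xs
    by (cases p) auto
  have "path_weight w xs \<le> path_weight w (p @ v # r)" using sp P2 unfolding is_shortest_path_def by auto
  moreover have "path_weight w (p @ v # r) = path_weight w (p @ [v]) + path_weight w (v # r)"
    using pw_append by metis
  moreover have "0 < path_weight w (v # q @ [v])"
    using pw_pos[of "v # q @ [v]" E w] e1 P HE pos unfolding is_path_def by auto
  ultimately show False using w1 by linarith
qed

lemma split_unique: "x \<notin> set A \<Longrightarrow> x \<notin> set C \<Longrightarrow> A @ x # R = C @ x # D \<Longrightarrow> A = C \<and> R = D"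
proof (induction A arbitrary: C)
  case Nil then show ?case by (cases C) auto
next
  case (Cons a A) then show ?case by (cases C) auto
qed

lemma canonD1:
  assumes "canonical_paths V E w cp" "H \<subseteq> E" "connected_in V H x y"
  shows "is_shortest_path V H w (cp H x y) x y"
proof -
  have "\<forall>H x y. H \<subseteq> E \<and> connected_in V H x y \<longrightarrow> is_shortest_path V H w (cp H x y) x y"
    using assms(1) unfolding canonical_paths_def by (rule conjunct1)
  then show ?thesis using assms(2,3) by blast
qed

lemma canonD2:
  assumes "canonical_paths V E w cp" "H \<subseteq> E" "connected_in V H x y" "z \<in> set (cp H x y)"
  shows "cp H x y = cp H x z @ tl (cp H z y)"
proof -
  have "\<forall>H x y z. H \<subseteq> E \<and> connected_in V H x y \<and> z \<in> set (cp H x y) \<longrightarrow>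
        cp H x y = cp H x z @ tl (cp H z y)"
    using assms(1) unfolding canonical_paths_def by (metis (no_types))
  then show ?thesis using assms(2,3,4) by blast
qed

lemma canonD3:
  assumes "canonical_paths V E w cp" "H \<subseteq> E" "connected_in V H x y" "e \<notin> path_edges (cp H x y)"
  shows "cp (H - {e}) x y = cp H x y"
proof -
  have "\<forall>H x y e. H \<subseteq> E \<and> connected_in V H x y \<and> e \<notin> path_edges (cp H x y) \<longrightarrow>
        cp (H - {e}) x y = cp H x y"
    using assms(1) unfolding canonical_paths_def by (metis (no_types))
  then show ?thesis using assms(2,3,4) by blast
qed

lemma canon_remove:
  assumes canon: "canonical_paths V E w cp" and fin: "finite F"
    and c: "connected_in V E s v" and avoid: "\<forall>e\<in>F. e \<notin> path_edges (cp E s v)"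
    and sp: "is_path V E (cp E s v) s v"
  shows "cp (E - F) s v = cp E s v"
  using fin avoid
proof (induction F rule: finite_induct)
  case empty then show ?case by simp
next
  case (insert e F)
  have IH: "cp (E - F) s v = cp E s v" using insert by auto
  have c1: "connected_in V (E - F) s v"
  proof -
    have "path_edges (cp E s v) \<subseteq> E - F" using sp insert(4) unfolding is_path_def by auto
    then have "is_path V (E - F) (cp E s v) s v" using sp unfolding is_path_def by auto
    then show ?thesis unfolding connected_in_def by auto
  qed
  have c2: "e \<notin> path_edges (cp (E - F) s v)" using IH insert(4) by auto
  have c3: "E - F \<subseteq> E" by auto
  have "cp (E - F - {e}) s v = cp (E - F) s v"
  proof -
    show ?thesis using canonD3[OF canon c3 c1 c2] .
  qed
  moreover have "E - insert e F = E - F - {e}" by auto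
  ultimately show ?case using IH by simp
qed

lemma path_snoc: "is_path V H xs a b \<Longrightarrow> {b,c} \<in> H \<Longrightarrow> c \<in> V \<Longrightarrow> is_path V H (xs @ [c]) a c"
proof -
  assume p: "is_path V H xs a b" and bc: "{b,c} \<in> H" and c: "c \<in> V"
  then obtain ys where xs: "xs = ys @ [b]" unfolding is_path_def by (metis append_butlast_last_id)
  have "path_edges (xs @ [c]) = path_edges xs \<union> {{b,c}}" using xs pe_append[of ys b "[c]"] by auto
  then show ?thesis using p bc c xs unfolding is_path_def by (cases ys) auto
qed

theorem proposition6:
  fixes V :: "'a set" and E :: "'a set set" and w :: "'a set \<Rightarrow> real"
    and cp :: "'a set set \<Rightarrow> 'a \<Rightarrow> 'a \<Rightarrow> 'a list"
    and s t :: 'a and F :: "'a set set" and S :: "'a set"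
  assumes graph: "wf_graph V E w"
    and canon: "canonical_paths V E w cp"
    and sV: "s \<in> V" and tV: "t \<in> V"
    and F_tree: "F \<subseteq> spt_edges V E cp s"
    and F_disj: "\<forall>e\<in>F. \<forall>e'\<in>F. e \<noteq> e' \<longrightarrow>
                   subtree_vertices V E cp s e \<inter> subtree_vertices V E cp s e' = {}"
    and S_def: "S = (\<Union>e\<in>F. subtree_vertices V E cp s e)"
    and tS: "t \<in> S"
    and conn: "connected_in V (E - F) s t"
  shows "(\<exists>x y. x \<in> V - S \<and> y \<in> S \<and> {x, y} \<in> E \<and> {x, y} \<notin> F \<and>
            cp (E - F) s t = cp E s x @ cp (E - F) y t)
       \<and> (\<forall>x y. x \<in> V - S \<and> y \<in> S \<and> {x, y} \<in> E \<and> {x, y} \<notin> F \<and>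
            cp (E - F) s t = cp E s x @ cp (E - F) y t \<longrightarrow>
            set (cp (E - F) y t) \<subseteq> S)"
proof -
  have CP1: "\<And>H x y. H \<subseteq> E \<Longrightarrow> connected_in V H x y \<Longrightarrow> is_shortest_path V H w (cp H x y) x y"
    using canonD1[OF canon] by blast
  have CP1': "\<And>H x y. H \<subseteq> E \<Longrightarrow> connected_in V H x y \<Longrightarrow> is_path V H (cp H x y) x y"
    using CP1 unfolding is_shortest_path_def by blast
  have CP2: "\<And>H x y z. H \<subseteq> E \<Longrightarrow> connected_in V H x y \<Longrightarrow> z \<in> set (cp H x y) \<Longrightarrow>
        cp H x y = cp H x z @ tl (cp H z y)"
    using canonD2[OF canon] by blast
  have pos: "\<forall>e\<in>E. w e > 0" and finV: "finite V" using graph unfolding wf_graph_def by auto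
  have "E \<subseteq> Pow V" using graph unfolding wf_graph_def by auto
  then have finE: "finite E" using finV by (meson finite_Pow_iff finite_subset)
  have "spt_edges V E cp s \<subseteq> E"
    unfolding spt_edges_def using CP1' unfolding is_path_def by blast
  then have FE: "F \<subseteq> E" using F_tree by auto
  have finF: "finite F" using FE finE finite_subset by auto
  have EF: "E - F \<subseteq> E" by auto
  have SV: "S \<subseteq> V" unfolding S_def subtree_vertices_def by auto
  have notS: "\<And>v. v \<in> V \<Longrightarrow> connected_in V E s v \<Longrightarrow> v \<notin> S \<Longrightarrow> \<forall>e\<in>F. e \<notin> path_edges (cp E s v)"
    unfolding S_def subtree_vertices_def by blast
  have inS: "\<And>v. v \<in> S \<Longrightarrow> connected_in V E s v \<and> (\<exists>e\<in>F. e \<in> path_edges (cp E s v))"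
    unfolding S_def subtree_vertices_def by blast
  have remove: "\<And>v. v \<in> V \<Longrightarrow> connected_in V E s v \<Longrightarrow> v \<notin> S \<Longrightarrow> cp (E - F) s v = cp E s v"
  proof -
    fix v assume v: "v \<in> V" "connected_in V E s v" "v \<notin> S"
    show "cp (E - F) s v = cp E s v"
      using canon_remove[OF canon finF v(2) notS[OF v] CP1'[of E s v]] v by simp
  qed
  have sS: "s \<notin> S"
  proof
    assume "s \<in> S"
    have p1: "is_path V E [s] s s" using sV unfolding is_path_def by auto
    then have "connected_in V E s s" unfolding connected_in_def by blast
    then have sp: "is_shortest_path V E w (cp E s s) s s" using CP1 by blast
    then have "path_weight w (cp E s s) \<le> 0" using p1 unfolding is_shortest_path_def
      by (metis pw_simps(2))
    moreover have "path_edges (cp E s s) \<subseteq> E" "cp E s s \<noteq> []"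
      using sp unfolding is_shortest_path_def is_path_def by auto
    ultimately have "length (cp E s s) < 2" using pw_pos[of "cp E s s" E w] pos by force
    then obtain a where "cp E s s = [a]" using \<open>cp E s s \<noteq> []\<close>
      by (cases "cp E s s"; cases "tl (cp E s s)") auto
    then show False using inS[OF \<open>s \<in> S\<close>] by auto
  qed
  define P where "P = cp (E - F) s t"
  have PS: "is_shortest_path V (E - F) w P s t" using CP1[OF EF conn] P_def by simp
  then have PP: "is_path V (E - F) P s t" unfolding is_shortest_path_def by auto
  have dP: "distinct P" using shortest_distinct[OF PS EF pos] .
  have "P \<noteq> []" "hd P = s" "last P = t" using PP unfolding is_path_def by auto
  have part1: "\<exists>x y. x \<in> V - S \<and> y \<in> S \<and> {x, y} \<in> E \<and> {x, y} \<notin> F \<and>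
            cp (E - F) s t = cp E s x @ cp (E - F) y t"
  proof -
    define A0 where "A0 = takeWhile (\<lambda>v. v \<notin> S) P"
    define R0 where "R0 = dropWhile (\<lambda>v. v \<notin> S) P"
    have PAR: "P = A0 @ R0" unfolding A0_def R0_def by simp
    have "t \<in> set P" using \<open>P \<noteq> []\<close> \<open>last P = t\<close> last_in_set by metis
    then have "R0 \<noteq> []" unfolding R0_def using tS by (auto simp: dropWhile_eq_Nil_conv)
    then have hR: "hd R0 \<in> S" unfolding R0_def using hd_dropWhile by (metis (mono_tags, lifting))
    have "A0 \<noteq> []" unfolding A0_def using \<open>P \<noteq> []\<close> \<open>hd P = s\<close> sS by (cases P) auto
    have A0S: "\<forall>v\<in>set A0. v \<notin> S" unfolding A0_def by (auto dest: set_takeWhileD)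
    obtain A x where A0: "A0 = A @ [x]" using \<open>A0 \<noteq> []\<close> by (metis rev_exhaust)
    obtain y R where R0: "R0 = y # R" using \<open>R0 \<noteq> []\<close> by (cases R0) auto
    have Pe: "P = A @ x # y # R" using PAR A0 R0 by simp
    have xS: "x \<notin> S" using A0S A0 by auto
    have yS: "y \<in> S" using hR R0 by simp
    have xV: "x \<in> V" using PP Pe unfolding is_path_def by auto
    have "path_edges (x # y # R) \<subseteq> E - F" using PP Pe pe_append[of A x "y # R"] unfolding is_path_def by auto
    then have xyE: "{x,y} \<in> E - F" by auto
    have pfx: "is_path V (E - F) (A @ [x]) s x" using path_prefix PP Pe by metis
    then have cx: "connected_in V (E - F) s x" unfolding connected_in_def by blast
    have psx: "is_path V (E - F) (x # y # R) x t" using path_suffix PP Pe by metis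
    then have cxt: "connected_in V (E - F) x t" unfolding connected_in_def by blast
    have psy: "is_path V (E - F) (y # R) y t" using path_suffix[of V "E - F" "A @ [x]" y R s t] PP Pe by simp
    then have cyt: "connected_in V (E - F) y t" unfolding connected_in_def by blast
    have pfy: "is_path V (E - F) (A @ [x, y]) s y" using path_prefix[of V "E - F" "A @ [x]" y R s t] PP Pe by simp
    then have cy: "connected_in V (E - F) s y" unfolding connected_in_def by blast
    have "x \<in> set P" using Pe by simp
    then have d1: "P = cp (E - F) s x @ tl (cp (E - F) x t)" using CP2[OF EF conn] P_def by simp
    have i1: "is_path V (E - F) (cp (E - F) s x) s x" using CP1'[OF EF cx] .
    then obtain C where C: "cp (E - F) s x = C @ [x]" unfolding is_path_def by (metis append_butlast_last_id)
    have i2: "is_path V (E - F) (cp (E - F) x t) x t" using CP1'[OF EF cxt] .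
    then obtain D where D: "cp (E - F) x t = x # D" unfolding is_path_def by (metis list.collapse)
    have "A @ x # (y # R) = C @ x # D" using d1 C D Pe by simp
    moreover have "x \<notin> set A" using dP Pe by auto
    moreover have "x \<notin> set C" proof -
      have "P = C @ x # D" using d1 C D by simp
      then have "distinct (C @ x # D)" using dP by simp
      then show ?thesis by simp
    qed
    ultimately have "A = C" using split_unique by metis
    then have cpx: "cp (E - F) s x = A @ [x]" using C by simp
    have "y \<in> set P" using Pe by simp
    then have d2: "P = cp (E - F) s y @ tl (cp (E - F) y t)" using CP2[OF EF conn] P_def by simp
    have "is_path V (E - F) (cp (E - F) s y) s y" using CP1'[OF EF cy] .
    then obtain C2 where C2: "cp (E - F) s y = C2 @ [y]" unfolding is_path_def by (metis append_butlast_last_id)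
    have "is_path V (E - F) (cp (E - F) y t) y t" using CP1'[OF EF cyt] .
    then obtain D2 where D2: "cp (E - F) y t = y # D2" unfolding is_path_def by (metis list.collapse)
    have eq2: "(A @ [x]) @ y # R = C2 @ y # D2" using d2 C2 D2 Pe by simp
    moreover have "y \<notin> set (A @ [x])" using dP Pe by auto
    moreover have "y \<notin> set C2"
    proof -
      have "P = C2 @ y # D2" using d2 C2 D2 by simp
      then have "distinct (C2 @ y # D2)" using dP by simp
      then show ?thesis by simp
    qed
    ultimately have "R = D2" using split_unique by metis
    then have cpy: "cp (E - F) y t = y # R" using D2 by simp
    have cEx: "connected_in V E s x" using path_mono[OF pfx EF] unfolding connected_in_def by blast
    have "cp (E - F) s x = cp E s x" using remove[OF xV cEx xS] .
    then have "cp (E - F) s t = cp E s x @ cp (E - F) y t" using cpx cpy Pe P_def by simp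
    then show ?thesis using xV xS yS xyE by blast
  qed
  have part2: "\<forall>x y. x \<in> V - S \<and> y \<in> S \<and> {x, y} \<in> E \<and> {x, y} \<notin> F \<and>
            cp (E - F) s t = cp E s x @ cp (E - F) y t \<longrightarrow>
            set (cp (E - F) y t) \<subseteq> S"
  proof (intro allI impI)
    fix x y assume H: "x \<in> V - S \<and> y \<in> S \<and> {x, y} \<in> E \<and> {x, y} \<notin> F \<and>
            cp (E - F) s t = cp E s x @ cp (E - F) y t"
    define Q where "Q = cp (E - F) y t"
    have xV: "x \<in> V" and xS: "x \<notin> S" and yS: "y \<in> S" and xyE: "{x,y} \<in> E" and xyF: "{x,y} \<notin> F"
      and PQ: "P = cp E s x @ Q" using H P_def Q_def by auto
    have yV: "y \<in> V" using yS SV by auto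
    have cEy: "connected_in V E s y" using inS[OF yS] by auto
    have "is_path V E (cp E s y @ [x]) s x"
      using path_snoc[OF CP1'[of E s y] _ xV] cEy xyE by (simp add: insert_commute)
    then have cEx: "connected_in V E s x" unfolding connected_in_def by blast
    then have "is_path V E (cp E s x) s x" using CP1' by blast
    then obtain A' where A': "cp E s x = A' @ [x]" unfolding is_path_def by (metis append_butlast_last_id)
    have Pe: "P = A' @ x # Q" using PQ A' by simp
    have "Q \<noteq> []"
    proof
      assume "Q = []" then have "last P = x" using Pe by simp
      then show False using \<open>last P = t\<close> tS xS by simp
    qed
    have "is_path V (E - F) (x # Q) x t" using path_suffix PP Pe by metis
    then have "is_path V (E - F) (y # x # Q) y t" using yV xyE xyF unfolding is_path_def
      by (cases Q) (auto simp: insert_commute)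
    then have cyt: "connected_in V (E - F) y t" unfolding connected_in_def by blast
    then have "is_path V (E - F) Q y t" using CP1'[OF EF] Q_def by simp
    then obtain Q' where Q': "Q = y # Q'" unfolding is_path_def by (metis list.collapse)
    show "set (cp (E - F) y t) \<subseteq> S"
    proof
      fix z assume "z \<in> set (cp (E - F) y t)"
      then have "z \<in> set Q" using Q_def by simp
      show "z \<in> S"
      proof (cases "z = y")
        case True then show ?thesis using yS by simp
      next
        case False
        then have "z \<in> set Q'" using Q' \<open>z \<in> set Q\<close> by simp
        then obtain Q1 Q2 where Q12: "Q' = Q1 @ z # Q2" using split_list by metis
        have Pz: "P = (A' @ x # y # Q1) @ z # Q2" using Pe Q' Q12 by simp
        show "z \<in> S"
        proof (rule ccontr)
          assume zS: "z \<notin> S"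
          have pfz: "is_path V (E - F) ((A' @ x # y # Q1) @ [z]) s z" using path_prefix PP Pz by metis
          then have cz: "connected_in V (E - F) s z" unfolding connected_in_def by blast
          have zV: "z \<in> V" using pfz unfolding is_path_def by auto
          have "is_path V (E - F) (z # Q2) z t" using path_suffix PP Pz by metis
          then have czt: "connected_in V (E - F) z t" unfolding connected_in_def by blast
          have "z \<in> set P" using Pz by simp
          then have d1: "P = cp (E - F) s z @ tl (cp (E - F) z t)" using CP2[OF EF conn] P_def by simp
          have "is_path V (E - F) (cp (E - F) s z) s z" using CP1'[OF EF cz] .
          then obtain C where C: "cp (E - F) s z = C @ [z]" unfolding is_path_def by (metis append_butlast_last_id)
          have "is_path V (E - F) (cp (E - F) z t) z t" using CP1'[OF EF czt] .
          then obtain D where D: "cp (E - F) z t = z # D" unfolding is_path_def by (metis list.collapse)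
          have eq: "(A' @ x # y # Q1) @ z # Q2 = C @ z # D" using d1 C D Pz by simp
          moreover have "z \<notin> set (A' @ x # y # Q1)" using dP Pz by auto
          moreover have "z \<notin> set C"
          proof -
            have "P = C @ z # D" using d1 C D by simp
            then have "distinct (C @ z # D)" using dP by simp
            then show ?thesis by simp
          qed
          ultimately have "C = A' @ x # y # Q1" using split_unique by metis
          then have "y \<in> set (cp (E - F) s z)" using C by simp
          moreover have cEz: "connected_in V E s z" using path_mono[OF pfz EF] unfolding connected_in_def by blast
          ultimately have yz: "y \<in> set (cp E s z)" using remove[OF zV cEz zS] by simp
          have "cp E s z = cp E s y @ tl (cp E y z)" using CP2[of E s z y] cEz yz by simp
          then have "path_edges (cp E s y) \<subseteq> path_edges (cp E s z)" using pe_prefix by metis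
          then obtain e where "e \<in> F" "e \<in> path_edges (cp E s z)" using inS[OF yS] by blast
          then have "z \<in> subtree_vertices V E cp s e" unfolding subtree_vertices_def using zV cEz by blast
          then show False using zS \<open>e \<in> F\<close> S_def by blast
        qed
      qed
    qed
  qed
  show ?thesis using part1 part2 by blast
qed

end
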